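(* Let $G$ be the $2$-coloured collection consisting of the eight arity-$2$ elements $(c;d_1d_2)$, $c,d_1,d_2\in\{1,2\}$, of $\mathrm{Bulle}$, with their colours. Then $\mathrm{Bulle}$ admits the presentation $(G,\leftrightarrow)$, where $\leftrightarrow$ is the following equivalence relation on coloured syntax trees of degree $2$ on $G$. For each $(c;d_1d_2d_3)$ with $c,d_1,d_2,d_3\in\{1,2\}$, the four trees $$\mathfrak c(c;e\,d_3)\circ_1\mathfrak c(e;d_1d_2)\quad\text{and}\quad\mathfrak c(c;d_1e)\circ_2\mathfrak c(e;d_2d_3),\qquad e\in\{1,2\},$$ are pairwise equivalent. This gives sixteen classes, of four trees each, and these are all the nontrivial relations. That is, two degree-$2$ trees are related iff they evaluate to the same element of $\mathrm{Bulle}$. Consequently, $\mathrm{Bulle}$ is isomorphic to $\mathcal F(G)/\!\equiv$, where $\equiv$ is the smallest coloured operadic congruence containing $\leftrightarrow$, via the morphism sending $\mathfrak c(g)$ to $g$.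
   Context: The $2$-coloured operad $\mathrm{Bulle}$ has as elements of arity $n\ge2$ (bubbles) the pairs $(c;d_1\cdots d_n)$ with $c,d_i\in\{1,2\}$, with output colour $c$ and $i$th input colour $d_i$. It also has two units $\mathbf 1_1,\mathbf 1_2$, with $\mathbf 1_c$ of output and input colour $c$. Its composition $(c;d_1\cdots d_n)\circ_i(e;f_1\cdots f_m)$ is defined iff $d_i=e$, and equals $(c;d_1\cdots d_{i-1}f_1\cdots f_md_{i+1}\cdots d_n)$. Geometrically, a bubble is a polygon with $n+1$ vertices whose base and edges are each blue or uncoloured, with no coloured diagonals: the output colour is $1$ iff the base is blue, and the $i$th input colour is $2$ iff the $i$th edge is blue. For a $2$-coloured collection $G$ (elements of arity $\ge2$ with output and input colours), $\mathcal F(G)$ is the free $2$-coloured operad: coloured syntax trees (planar rooted trees with nodes of arity $\ell$ labelled by elements of $G(\ell)$, such that the $i$th child of a node labelled $x$, if internal with label $y$, satisfies $\mathrm{In}_i(x)=\mathrm{Out}(y)$), composed by grafting. Here $\mathfrak c(x)$ is the corolla labelled $x$, the degree of a tree is its number of internal nodes, and $\mathfrak c(x)\circ_i\mathfrak c(y)$ is the tree obtained by grafting the corolla of $y$ on the $i$th leaf of the corolla of $x$. A presentation $(G,\leftrightarrow)$ of a coloured operad $\mathcal C$ means that $\mathcal C\cong\mathcal F(G)/\!\equiv$ with $\equiv$ the smallest coloured operadic congruence containing $\leftrightarrow$. *)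

theory Defs
  imports Main
begin

datatype col = C1 | C2

text \<open>An element of Bulle is a pair (output colour, list of input colours).
  Bubbles are those of arity at least 2; the unit of colour c is (c,[c]).\<close>
type_synonym bulle = "col \<times> col list"

definition Bulle :: "bulle set" where
  "Bulle = {(c, ds). 2 \<le> length ds} \<union> {(c, [c]) | c. True}"

text \<open>Partial composition (c;ds) o_i (e;fs), i 1-indexed; defined iff
  1 \<le> i \<le> length ds and ds!(i-1) = e.\<close>
definition bcomp :: "bulle \<Rightarrow> nat \<Rightarrow> bulle \<Rightarrow> bulle" where
  "bcomp x i y = (fst x, take (i - 1) (snd x) @ snd y @ drop i (snd x))"

definition G :: "bulle set" where
  "G = {(c, [d1, d2]) | c d1 d2. True}"

text \<open>Leaf a is a leaf of colour a (alone, the unit of colour a);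
  Node c d1 d2 l r is a node labelled (c;d1 d2) with children l, r.\<close>
datatype tree = Leaf col | Node col col col tree tree

fun out :: "tree \<Rightarrow> col" where
  "out (Leaf a) = a"
| "out (Node c d1 d2 l r) = c"

fun inputs :: "tree \<Rightarrow> col list" where
  "inputs (Leaf a) = [a]"
| "inputs (Node c d1 d2 l r) = inputs l @ inputs r"

fun nleaves :: "tree \<Rightarrow> nat" where
  "nleaves (Leaf a) = 1"
| "nleaves (Node c d1 d2 l r) = nleaves l + nleaves r"

fun deg :: "tree \<Rightarrow> nat" where
  "deg (Leaf a) = 0"
| "deg (Node c d1 d2 l r) = Suc (deg l + deg r)"

fun wf :: "tree \<Rightarrow> bool" where
  "wf (Leaf a) = True"
| "wf (Node c d1 d2 l r) = (wf l \<and> wf r \<and> out l = d1 \<and> out r = d2)"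

text \<open>Grafting s on the i-th leaf (1-indexed) of t: the operation t o_i s.\<close>
fun graft :: "tree \<Rightarrow> nat \<Rightarrow> tree \<Rightarrow> tree" where
  "graft (Leaf a) i s = (if i = 1 then s else Leaf a)"
| "graft (Node c d1 d2 l r) i s =
     (if i \<le> nleaves l then Node c d1 d2 (graft l i s) r
      else Node c d1 d2 l (graft r (i - nleaves l) s))"

definition corolla :: "col \<Rightarrow> col \<Rightarrow> col \<Rightarrow> tree" where
  "corolla c d1 d2 = Node c d1 d2 (Leaf d1) (Leaf d2)"

text \<open>Evaluation of a tree in Bulle (the morphism F(G) \<rightarrow> Bulle induced by c(g) \<mapsto> g).\<close>
definition eval :: "tree \<Rightarrow> bulle" where
  "eval t = (out t, inputs t)"

definition rclass :: "col \<Rightarrow> col \<Rightarrow> col \<Rightarrow> col \<Rightarrow> tree set" where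
  "rclass c d1 d2 d3 =
     {graft (corolla c e d3) 1 (corolla e d1 d2) | e. True} \<union>
     {graft (corolla c d1 e) 2 (corolla e d2 d3) | e. True}"

definition rel :: "tree \<Rightarrow> tree \<Rightarrow> bool" where
  "rel s t \<longleftrightarrow> (\<exists>c d1 d2 d3. s \<in> rclass c d1 d2 d3 \<and> t \<in> rclass c d1 d2 d3)
                \<or> (s = t \<and> wf s \<and> deg s = 2)"

inductive opcong :: "(tree \<Rightarrow> tree \<Rightarrow> bool) \<Rightarrow> tree \<Rightarrow> tree \<Rightarrow> bool" for R where
  gen: "R s t \<Longrightarrow> opcong R s t"
| refl: "wf t \<Longrightarrow> opcong R t t"
| sym: "opcong R s t \<Longrightarrow> opcong R t s"
| trans: "opcong R s t \<Longrightarrow> opcong R t u \<Longrightarrow> opcong R s u"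
| comp: "opcong R s s' \<Longrightarrow> opcong R t t' \<Longrightarrow> 1 \<le> i \<Longrightarrow> i \<le> nleaves s \<Longrightarrow>
         inputs s ! (i - 1) = out t \<Longrightarrow> opcong R (graft s i t) (graft s' i t')"

end

theory Submission
  imports Defs
begin

lemma nleaves_len: "nleaves t = length (inputs t)"
  by (induction t) auto

lemma nleaves_pos[simp]: "1 \<le> nleaves t"
  by (induction t) auto

lemma inputs_ne[simp]: "inputs t \<noteq> []"
  by (induction t) auto

lemma wf_Node_len: "2 \<le> length (inputs (Node c a b l r))"
  using inputs_ne[of l] inputs_ne[of r]
  by (simp, metis One_nat_def Suc_1 Suc_le_eq add_le_mono length_greater_0_conv one_add_one)

lemma graft_out: "wf s \<Longrightarrow> 1 \<le> i \<Longrightarrow> i \<le> nleaves s \<Longrightarrow> inputs s ! (i - 1) = out t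
   \<Longrightarrow> out (graft s i t) = out s"
  by (induction s arbitrary: i) auto

lemma graft_inputs: "1 \<le> i \<Longrightarrow> i \<le> nleaves s
   \<Longrightarrow> inputs (graft s i t) = take (i - 1) (inputs s) @ inputs t @ drop i (inputs s)"
proof (induction s arbitrary: i)
  case (Leaf a)
  then show ?case by auto
next
  case (Node c d1 d2 l r)
  show ?case
  proof (cases "i \<le> nleaves l")
    case True
    then show ?thesis using Node by (simp add: nleaves_len)
  next
    case False
    then have "1 \<le> i - nleaves l" "i - nleaves l \<le> nleaves r" using Node.prems by auto
    then show ?thesis using Node.IH(2)[of "i - nleaves l"] False
      by (simp add: nleaves_len)
  qed
qed

lemma graft_wf: "wf s \<Longrightarrow> wf t \<Longrightarrow> 1 \<le> i \<Longrightarrow> i \<le> nleaves s \<Longrightarrow> inputs s ! (i - 1) = out t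
   \<Longrightarrow> wf (graft s i t)"
proof (induction s arbitrary: i)
  case (Leaf a)
  then show ?case by auto
next
  case (Node c d1 d2 l r)
  show ?case
  proof (cases "i \<le> nleaves l")
    case True
    then have "inputs l ! (i - 1) = out t" using Node.prems
      by (auto simp: nleaves_len nth_append split: if_splits)
    then show ?thesis using Node True by (auto simp: graft_out)
  next
    case False
    then have "1 \<le> i - nleaves l" "i - nleaves l \<le> nleaves r" using Node.prems by auto
    moreover have "inputs r ! (i - nleaves l - 1) = out t"
      using Node.prems False by (auto simp: nleaves_len nth_append split: if_splits)
    ultimately show ?thesis using Node False by (auto simp: graft_out)
  qed
qed

lemma eval_graft: "wf s \<Longrightarrow> 1 \<le> i \<Longrightarrow> i \<le> nleaves s \<Longrightarrow> inputs s ! (i - 1) = out t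
   \<Longrightarrow> eval (graft s i t) = bcomp (eval s) i (eval t)"
  by (simp add: eval_def bcomp_def graft_out graft_inputs)

lemma rel_wf: "rel s t \<Longrightarrow> wf s \<and> wf t"
  unfolding rel_def rclass_def corolla_def by auto

lemma rel_eval: "rel s t \<Longrightarrow> eval s = eval t"
  unfolding rel_def rclass_def corolla_def eval_def by auto

lemma opcong_sound: "opcong rel s t \<Longrightarrow> wf s \<and> wf t \<and> eval s = eval t"
proof (induction rule: opcong.induct)
  case (gen s t)
  then show ?case using rel_wf rel_eval by blast
next
  case (comp s s' t t' i)
  have e: "out s' = out s" "inputs s' = inputs s" "out t' = out t" "inputs t' = inputs t"
    using comp.IH by (auto simp: eval_def)
  have c': "i \<le> nleaves s'" "inputs s' ! (i - 1) = out t'"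
    using comp e by (auto simp: nleaves_len)
  have w: "wf s" "wf s'" "wf t" "wf t'" using comp.IH by auto
  have "eval (graft s i t) = bcomp (eval s) i (eval t)"
    using eval_graft[OF w(1) comp.hyps(3,4,5)] .
  moreover have "eval (graft s' i t') = bcomp (eval s') i (eval t')"
    using eval_graft[OF w(2) comp.hyps(3) c'] .
  moreover have "wf (graft s i t)" using graft_wf[OF w(1,3) comp.hyps(3,4,5)] .
  moreover have "wf (graft s' i t')" using graft_wf[OF w(2,4) comp.hyps(3) c'] .
  ultimately show ?case using comp.IH by simp
qed auto

fun canon :: "col \<Rightarrow> col list \<Rightarrow> tree" where
  "canon c [] = Leaf c"
| "canon c [a] = Leaf a"
| "canon c (a # b # xs) =
     (let k = (if xs = [] then b else C1) in Node c a k (Leaf a) (canon k (b # xs)))"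

lemma canon_props: "xs \<noteq> [] \<Longrightarrow> wf (canon c xs) \<and> inputs (canon c xs) = xs
   \<and> out (canon c xs) = (if length xs = 1 then hd xs else c)"
proof (induction c xs rule: canon.induct)
  case (3 c a b xs)
  show ?case using 3(1)[OF HOL.refl] by (simp add: Let_def)
qed auto

abbreviation OC where "OC \<equiv> opcong rel"

lemma node_cong: "OC l l' \<Longrightarrow> OC r r' \<Longrightarrow> out l = d1 \<Longrightarrow> out r = d2
  \<Longrightarrow> OC (Node c d1 d2 l r) (Node c d1 d2 l' r')"
proof -
  assume a: "OC l l'" "OC r r'" "out l = d1" "out r = d2"
  have "OC (corolla c d1 d2) (corolla c d1 d2)" by (rule opcong.refl) (simp add: corolla_def)
  from opcong.comp[OF this a(2), of 2] a
  have "OC (Node c d1 d2 (Leaf d1) r) (Node c d1 d2 (Leaf d1) r')" by (simp add: corolla_def)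
  from opcong.comp[OF this a(1), of 1] a show ?thesis by simp
qed

lemma rot: "wf A \<Longrightarrow> wf B \<Longrightarrow> wf R \<Longrightarrow> out A = x \<Longrightarrow> out B = y \<Longrightarrow> out R = d3 \<Longrightarrow>
  OC (Node c e d3 (Node e x y A B) R) (Node c x e' A (Node e' y d3 B R))"
proof -
  assume a: "wf A" "wf B" "wf R" "out A = x" "out B = y" "out R = d3"
  have "rel (Node c e d3 (Node e x y (Leaf x) (Leaf y)) (Leaf d3))
            (Node c x e' (Leaf x) (Node e' y d3 (Leaf y) (Leaf d3)))"
    unfolding rel_def rclass_def corolla_def
    by (rule disjI1, rule exI[of _ c], rule exI[of _ x], rule exI[of _ y], rule exI[of _ d3]) auto
  then have b: "OC (Node c e d3 (Node e x y (Leaf x) (Leaf y)) (Leaf d3))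
            (Node c x e' (Leaf x) (Node e' y d3 (Leaf y) (Leaf d3)))" by (rule opcong.gen)
  have rR: "OC R R" "OC B B" "OC A A" using a by (auto intro: opcong.refl)
  from opcong.comp[OF b rR(1), of 3] a
  have "OC (Node c e d3 (Node e x y (Leaf x) (Leaf y)) R)
            (Node c x e' (Leaf x) (Node e' y d3 (Leaf y) R))" by simp
  from opcong.comp[OF this rR(2), of 2] a
  have "OC (Node c e d3 (Node e x y (Leaf x) B) R)
            (Node c x e' (Leaf x) (Node e' y d3 B R))" by simp
  from opcong.comp[OF this rR(3), of 1] a show ?thesis by simp
qed

lemma recol: "wf A \<Longrightarrow> wf B \<Longrightarrow> wf R \<Longrightarrow> out A = x \<Longrightarrow> out B = y \<Longrightarrow> out R = d3 \<Longrightarrow>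
  OC (Node c x e A (Node e y d3 B R)) (Node c x e' A (Node e' y d3 B R))"
  by (meson opcong.sym opcong.trans rot)

lemma canon_join: "xs \<noteq> [] \<Longrightarrow> ys \<noteq> [] \<Longrightarrow> (length xs = 1 \<longrightarrow> d1 = hd xs)
  \<Longrightarrow> (length ys = 1 \<longrightarrow> d2 = hd ys)
  \<Longrightarrow> OC (Node c d1 d2 (canon d1 xs) (canon d2 ys)) (canon c (xs @ ys))"
proof (induction xs arbitrary: c d1)
  case Nil
  then show ?case by simp
next
  case (Cons a xs)
  have Y: "wf (canon d2 ys)" "out (canon d2 ys) = d2" "inputs (canon d2 ys) = ys"
    using canon_props[OF Cons.prems(2), of d2] Cons.prems by auto
  show ?case
  proof (cases xs)
    case Nil
    then have d1: "d1 = a" using Cons.prems by simp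
    show ?thesis
    proof (cases ys)
      case Nil then show ?thesis using Cons.prems by simp
    next
      case (Cons b ys')
      show ?thesis
      proof (cases ys')
        case Nil
        then show ?thesis using Cons \<open>xs = []\<close> d1 Cons.prems
          by (auto intro!: opcong.refl)
      next
        case (Cons b' ys'')
        let ?k = "if ys'' = [] then b' else C1"
        have R: "wf (canon ?k (b' # ys''))" "out (canon ?k (b' # ys'')) = ?k"
          using canon_props[of "b' # ys''" ?k] by auto
        show ?thesis using \<open>xs = []\<close> d1 \<open>ys = b # ys'\<close> Cons
          using recol[of "Leaf a" "Leaf b" "canon ?k (b' # ys'')" a b ?k c d2 C1] R
          by (simp add: Let_def)
      qed
    qed
  next
    case (Cons a' xs')
    let ?k = "if xs' = [] then a' else C1"
    have X: "wf (canon ?k (a' # xs'))" "out (canon ?k (a' # xs')) = ?k"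
      "inputs (canon ?k (a' # xs')) = a' # xs'"
      using canon_props[of "a' # xs'" ?k] by auto
    have r1: "OC (Node c d1 d2 (Node d1 a ?k (Leaf a) (canon ?k (a' # xs'))) (canon d2 ys))
        (Node c a C1 (Leaf a) (Node C1 ?k d2 (canon ?k (a' # xs')) (canon d2 ys)))"
      using rot[of "Leaf a" "canon ?k (a' # xs')" "canon d2 ys" a ?k d2 c d1 C1] X Y by simp
    have ih: "OC (Node C1 ?k d2 (canon ?k (a' # xs')) (canon d2 ys)) (canon C1 (a' # xs' @ ys))"
      using Cons.IH[of ?k C1] Cons Cons.prems by auto
    have r2: "OC (Node c a C1 (Leaf a) (Node C1 ?k d2 (canon ?k (a' # xs')) (canon d2 ys)))
              (Node c a C1 (Leaf a) (canon C1 (a' # xs' @ ys)))"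
      by (rule node_cong[OF opcong.refl ih]) (use X Y in auto)
    have e: "canon c ((a # xs) @ ys) = Node c a C1 (Leaf a) (canon C1 (a' # xs' @ ys))"
      using Cons Cons.prems by (cases "xs' @ ys") (auto simp: Let_def)
    show ?thesis using opcong.trans[OF r1 r2] e Cons by (simp add: Let_def)
  qed
qed

lemma out_canon_self: "out (canon (out t) (inputs t)) = out t"
proof (cases t)
  case (Leaf a) then show ?thesis by simp
next
  case (Node c a b l r)
  then have "length (inputs t) \<noteq> 1" using wf_Node_len[of c a b l r] by auto
  then show ?thesis using canon_props[of "inputs t" "out t"] by simp
qed

lemma canon_cond: "length (inputs t) = 1 \<longrightarrow> out t = hd (inputs t)"
proof (cases t)
  case (Node c a b l r)
  then have "length (inputs t) \<ge> 2" using wf_Node_len[of c a b l r] by simp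
  then show ?thesis by simp
qed simp

lemma to_canon: "wf t \<Longrightarrow> OC t (canon (out t) (inputs t))"
proof (induction t)
  case (Leaf a)
  then show ?case by (auto intro: opcong.refl)
next
  case (Node c d1 d2 l r)
  have L: "out (canon d1 (inputs l)) = d1" "out (canon d2 (inputs r)) = d2"
    using Node.prems out_canon_self[of l] out_canon_self[of r] by auto
  have "OC (Node c d1 d2 l r) (Node c d1 d2 (canon d1 (inputs l)) (canon d2 (inputs r)))"
    using Node by (auto intro: node_cong)
  moreover have "OC (Node c d1 d2 (canon d1 (inputs l)) (canon d2 (inputs r))) (canon c (inputs l @ inputs r))"
    apply (rule canon_join) using Node.prems canon_cond[of l] canon_cond[of r] by auto
  ultimately show ?case by (auto intro: opcong.trans)
qed

lemma rclass_eval: "s \<in> rclass c d1 d2 d3 \<Longrightarrow> eval s = (c, [d1, d2, d3])"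
  unfolding rclass_def corolla_def eval_def by auto

lemma deg2_shape: "wf t \<Longrightarrow> deg t = 2 \<Longrightarrow> \<exists>c d1 d2 d3. t \<in> rclass c d1 d2 d3"
proof (cases t)
  case (Leaf a) assume "deg t = 2" then show ?thesis using Leaf by simp
next
  case (Node c a b l r)
  assume w: "wf t" "deg t = 2"
  then have dg: "deg l + deg r = 1" using Node by simp
  show ?thesis
  proof (cases "deg l = 0")
    case True
    then obtain x where l: "l = Leaf x" by (cases l) auto
    have "deg r = 1" using True dg by simp
    then obtain e y z u v where r: "r = Node e y z u v" "deg u = 0" "deg v = 0" by (cases r) auto
    then obtain y' z' where "u = Leaf y'" "v = Leaf z'" by (cases u; cases v) auto
    then have "t = graft (corolla c x e) 2 (corolla e y z)" using w Node l r
      by (simp add: corolla_def)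
    then show ?thesis unfolding rclass_def by blast
  next
    case False
    then have "deg l = 1" "deg r = 0" using dg by auto
    then obtain e y z u v where l: "l = Node e y z u v" "deg u = 0" "deg v = 0" by (cases l) auto
    then obtain y' z' where "u = Leaf y'" "v = Leaf z'" by (cases u; cases v) auto
    moreover obtain x where "r = Leaf x" using \<open>deg r = 0\<close> by (cases r) auto
    ultimately have "t = graft (corolla c e x) 1 (corolla e y z)" using w Node l
      by (simp add: corolla_def)
    then show ?thesis unfolding rclass_def by blast
  qed
qed

theorem theorem2p5:
  shows "(\<forall>s t. wf s \<and> wf t \<and> deg s = 2 \<and> deg t = 2 \<longrightarrow> (rel s t \<longleftrightarrow> eval s = eval t))
       \<and> (\<forall>s t. wf s \<and> wf t \<longrightarrow> (opcong rel s t \<longleftrightarrow> eval s = eval t))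
       \<and> eval ` {t. wf t} = Bulle
       \<and> (\<forall>s t i. wf s \<and> wf t \<and> 1 \<le> i \<and> i \<le> nleaves s \<and> inputs s ! (i - 1) = out t
              \<longrightarrow> eval (graft s i t) = bcomp (eval s) i (eval t))
       \<and> (\<forall>c d1 d2. (c, [d1, d2]) \<in> G \<and> eval (corolla c d1 d2) = (c, [d1, d2]))"
proof (intro conjI allI impI)
  fix s t assume a: "wf s \<and> wf t \<and> deg s = 2 \<and> deg t = 2"
  show "rel s t \<longleftrightarrow> eval s = eval t"
  proof
    assume "rel s t" then show "eval s = eval t" by (rule rel_eval)
  next
    assume e: "eval s = eval t"
    obtain c d1 d2 d3 where s: "s \<in> rclass c d1 d2 d3" using deg2_shape a by blast
    obtain c' d1' d2' d3' where t: "t \<in> rclass c' d1' d2' d3'" using deg2_shape a by blast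
    have "c' = c" "d1' = d1" "d2' = d2" "d3' = d3"
      using rclass_eval[OF s] rclass_eval[OF t] e by auto
    then show "rel s t" using s t unfolding rel_def by blast
  qed
next
  fix s t assume a: "wf s \<and> wf t"
  show "opcong rel s t \<longleftrightarrow> eval s = eval t"
  proof
    assume "opcong rel s t" then show "eval s = eval t" using opcong_sound by blast
  next
    assume e: "eval s = eval t"
    then have "out s = out t" "inputs s = inputs t" by (auto simp: eval_def)
    then show "opcong rel s t"
      using to_canon[of s] to_canon[of t] a by (metis opcong.sym opcong.trans)
  qed
next
  show "eval ` {t. wf t} = Bulle"
  proof
    show "eval ` {t. wf t} \<subseteq> Bulle"
    proof
      fix x assume "x \<in> eval ` {t. wf t}"
      then obtain t where x: "x = eval t" by auto
      show "x \<in> Bulle"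
      proof (cases t)
        case (Leaf a) then show ?thesis using x by (simp add: Bulle_def eval_def)
      next
        case (Node c a b l r) then show ?thesis using x wf_Node_len[of c a b l r]
          by (simp add: Bulle_def eval_def)
      qed
    qed
  next
    show "Bulle \<subseteq> eval ` {t. wf t}"
    proof
      fix x assume "x \<in> Bulle"
      then obtain c ds where x: "x = (c, ds)" and h: "2 \<le> length ds \<or> ds = [c]"
        unfolding Bulle_def by auto
      show "x \<in> eval ` {t. wf t}"
      proof (cases "ds = [c]")
        case True
        then have "x = eval (Leaf c)" using x by (simp add: eval_def)
        then show ?thesis by force
      next
        case False
        then have "2 \<le> length ds" using h by auto
        then have "ds \<noteq> []" "length ds \<noteq> 1" by auto
        then have "x = eval (canon c ds)" "wf (canon c ds)"
          using canon_props[of ds c] x by (auto simp: eval_def)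
        then show ?thesis by blast
      qed
    qed
  qed
next
  fix s t i assume "wf s \<and> wf t \<and> 1 \<le> i \<and> i \<le> nleaves s \<and> inputs s ! (i - 1) = out t"
  then show "eval (graft s i t) = bcomp (eval s) i (eval t)" using eval_graft by blast
next
  fix c d1 d2
  show "(c, [d1, d2]) \<in> G" by (simp add: G_def)
next
  fix c d1 d2
  show "eval (corolla c d1 d2) = (c, [d1, d2])"
    by (simp add: eval_def corolla_def)
qed

end
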